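(* In the $E$-generic bisimulation game on an LTS $L=\langle S,A,\to\rangle$ (for any $E\subseteq\{\frown,\smile\}$), the configurations $\langle (s,t),c,m,*\rangle_S$ and $\langle (s,t),c,m,\checkmark\rangle_S$ are won by the same player, and so are $\langle (s,t),c,m,*\rangle_D$ and $\langle (s,t),c,m,\checkmark\rangle_D$.
   Context: An LTS is $\langle S,A,\to\rangle$ with states $S$, actions $A$ containing the internal action $\tau$, and $\to\subseteq S\times A\times S$; write $s\xrightarrow{a}t$. Generic bisimulation game. Let $\frown,\smile$ be formal tags and $E\subseteq\{\frown,\smile\}$. Spoiler-owned configurations $\langle (s,t),c,m,r\rangle_S$ and Duplicator-owned $\langle (s,t),c,m,r\rangle_D$ have $(s,t)\in S\times S$, $c\in (A\times S)\cup\{\dagger\}$, $m\in (S\times\{\frown,\smile\})\cup\{\dagger\}$, $r\in\{*,\checkmark\}$. From $\langle (s,t),c,m,r\rangle_S$ Spoiler may: (S1) move to $\langle (s,t),c,m,*\rangle_D$ if $c\neq\dagger$; (S2a) for some $s\xrightarrow{a}s'$, move to $\langle (s,t),(a,s'),(t,\frown),*\rangle_D$ if $c=\dagger$; (S2b) for some $s\xrightarrow{a}s'$, move to $\langle (s,t),(a,s'),(t,\frown),\checkmark\rangle_D$ if $c\neq (a,s')$; (S3) for some $t\xrightarrow{a}t'$, move to $\langle (t,s),(a,t'),(s,\frown),\checkmark\rangle_D$. From $\langle (u,v),(a,u'),(\bar v,f),r\rangle_D$ Duplicator may: (D1) move to $\langle (u',\bar v),\dagger,\dagger,\checkmark\rangle_S$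 if $a=\tau$; (D2) if $f=\frown$ and $\bar v\xrightarrow{a}v'$: (a) move to $\langle (u',v'),(a,u'),(v',\smile),*\rangle_S$, or (b) move to $\langle (u',v'),\dagger,\dagger,\checkmark\rangle_S$, or (c) only if $\smile\in E$, move to $\langle (u,v),(a,u'),(v',\smile),*\rangle_S$; (D3) for some $\bar v\xrightarrow{\tau}v'$: (a) move to $\langle (u,v'),(a,u'),(v',f),*\rangle_S$, or (b) only if $f=\smile$, move to $\langle (u',v'),\dagger,\dagger,\checkmark\rangle_S$, or (c) only if $f\in E$, move to $\langle (u,v),(a,u'),(v',f),*\rangle_S$. Duplicator wins a finite play if Spoiler gets stuck, and an infinite play if it has infinitely many $\checkmark$ rewards; other plays are won by Spoiler. A player wins a configuration if she has a strategy winning all plays starting in it. *)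

theory Defs
  imports Main
begin

text \<open>An LTS is given by a transition predicate step s a t (s --a--> t);
  states are the type 's, actions the type 'a, and tau is the internal action.\<close>

datatype tag = Frown | Smile
datatype rew = Star | Check
datatype player = Spoiler | Duplicator

text \<open>Configurations: Spoiler-owned (SConf) and Duplicator-owned (DConf).
  Components: pair (s,t); c (None = dagger); m (None = dagger); reward r.\<close>
datatype ('s, 'a) conf =
    SConf "'s \<times> 's" "('a \<times> 's) option" "('s \<times> tag) option" rew
  | DConf "'s \<times> 's" "('a \<times> 's) option" "('s \<times> tag) option" rew

fun owner :: "('s, 'a) conf \<Rightarrow> player" where
  "owner (SConf _ _ _ _) = Spoiler"
| "owner (DConf _ _ _ _) = Duplicator"

fun reward :: "('s, 'a) conf \<Rightarrow> rew" where
  "reward (SConf _ _ _ r) = r"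
| "reward (DConf _ _ _ r) = r"

inductive gmove :: "tag set \<Rightarrow> ('s \<Rightarrow> 'a \<Rightarrow> 's \<Rightarrow> bool) \<Rightarrow> 'a
    \<Rightarrow> ('s, 'a) conf \<Rightarrow> ('s, 'a) conf \<Rightarrow> bool"
  for E :: "tag set" and step :: "'s \<Rightarrow> 'a \<Rightarrow> 's \<Rightarrow> bool" and tau :: 'a where
  S1: "c \<noteq> None \<Longrightarrow> gmove E step tau (SConf (s,t) c m r) (DConf (s,t) c m Star)"
| S2a: "c = None \<Longrightarrow> step s a s' \<Longrightarrow>
     gmove E step tau (SConf (s,t) c m r) (DConf (s,t) (Some (a,s')) (Some (t,Frown)) Star)"
| S2b: "c \<noteq> Some (a,s') \<Longrightarrow> step s a s' \<Longrightarrow>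
     gmove E step tau (SConf (s,t) c m r) (DConf (s,t) (Some (a,s')) (Some (t,Frown)) Check)"
| S3: "step t a t' \<Longrightarrow>
     gmove E step tau (SConf (s,t) c m r) (DConf (t,s) (Some (a,t')) (Some (s,Frown)) Check)"
| D1: "a = tau \<Longrightarrow>
     gmove E step tau (DConf (u,v) (Some (a,u')) (Some (vb,f)) r) (SConf (u',vb) None None Check)"
| D2a: "f = Frown \<Longrightarrow> step vb a v' \<Longrightarrow>
     gmove E step tau (DConf (u,v) (Some (a,u')) (Some (vb,f)) r)
       (SConf (u',v') (Some (a,u')) (Some (v',Smile)) Star)"
| D2b: "f = Frown \<Longrightarrow> step vb a v' \<Longrightarrow>
     gmove E step tau (DConf (u,v) (Some (a,u')) (Some (vb,f)) r) (SConf (u',v') None None Check)"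
| D2c: "f = Frown \<Longrightarrow> step vb a v' \<Longrightarrow> Smile \<in> E \<Longrightarrow>
     gmove E step tau (DConf (u,v) (Some (a,u')) (Some (vb,f)) r)
       (SConf (u,v) (Some (a,u')) (Some (v',Smile)) Star)"
| D3a: "step vb tau v' \<Longrightarrow>
     gmove E step tau (DConf (u,v) (Some (a,u')) (Some (vb,f)) r)
       (SConf (u,v') (Some (a,u')) (Some (v',f)) Star)"
| D3b: "step vb tau v' \<Longrightarrow> f = Smile \<Longrightarrow>
     gmove E step tau (DConf (u,v) (Some (a,u')) (Some (vb,f)) r) (SConf (u',v') None None Check)"
| D3c: "step vb tau v' \<Longrightarrow> f \<in> E \<Longrightarrow>
     gmove E step tau (DConf (u,v) (Some (a,u')) (Some (vb,f)) r)
       (SConf (u,v) (Some (a,u')) (Some (v',f)) Star)"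

text \<open>Strategies are functions from nonempty histories (finite play prefixes)
  to the next configuration; they must propose legal moves whenever one exists.\<close>
type_synonym ('s, 'a) strategy = "('s, 'a) conf list \<Rightarrow> ('s, 'a) conf"

definition legal_strategy where
  "legal_strategy E step tau p (\<sigma> :: ('s, 'a) strategy) \<longleftrightarrow>
     (\<forall>h. h \<noteq> [] \<and> owner (last h) = p \<and> (\<exists>w. gmove E step tau (last h) w)
          \<longrightarrow> gmove E step tau (last h) (\<sigma> h))"

definition fin_play where
  "fin_play E step tau v (xs :: ('s, 'a) conf list) \<longleftrightarrow>
     xs \<noteq> [] \<and> hd xs = v \<and>
     (\<forall>i. Suc i < length xs \<longrightarrow> gmove E step tau (xs ! i) (xs ! Suc i)) \<and>
     (\<nexists>w. gmove E step tau (last xs) w)"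

definition inf_play where
  "inf_play E step tau v (\<rho> :: nat \<Rightarrow> ('s, 'a) conf) \<longleftrightarrow>
     \<rho> 0 = v \<and> (\<forall>i. gmove E step tau (\<rho> i) (\<rho> (Suc i)))"

definition fin_consistent where
  "fin_consistent p (\<sigma> :: ('s, 'a) strategy) xs \<longleftrightarrow>
     (\<forall>i. Suc i < length xs \<longrightarrow> owner (xs ! i) = p \<longrightarrow> xs ! Suc i = \<sigma> (take (Suc i) xs))"

definition inf_consistent where
  "inf_consistent p (\<sigma> :: ('s, 'a) strategy) \<rho> \<longleftrightarrow>
     (\<forall>i. owner (\<rho> i) = p \<longrightarrow> \<rho> (Suc i) = \<sigma> (map \<rho> [0..<Suc i]))"

definition fin_winner :: "('s, 'a) conf list \<Rightarrow> player" where
  "fin_winner xs = (if owner (last xs) = Spoiler then Duplicator else Spoiler)"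

definition inf_winner :: "(nat \<Rightarrow> ('s, 'a) conf) \<Rightarrow> player" where
  "inf_winner \<rho> = (if (\<exists>\<^sub>\<infinity>i. reward (\<rho> i) = Check) then Duplicator else Spoiler)"

definition wins :: "tag set \<Rightarrow> ('s \<Rightarrow> 'a \<Rightarrow> 's \<Rightarrow> bool) \<Rightarrow> 'a \<Rightarrow> player
    \<Rightarrow> ('s, 'a) conf \<Rightarrow> bool" where
  "wins E step tau p v \<longleftrightarrow>
     (\<exists>\<sigma>. legal_strategy E step tau p \<sigma> \<and>
       (\<forall>xs. fin_play E step tau v xs \<and> fin_consistent p \<sigma> xs \<longrightarrow> fin_winner xs = p) \<and>
       (\<forall>\<rho>. inf_play E step tau v \<rho> \<and> inf_consistent p \<sigma> \<rho> \<longrightarrow> inf_winner \<rho> = p))"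

end

theory Submission
  imports Defs "HOL-Library.Infinite_Set"
begin

lemma moves_S: "gmove E step tau (SConf (s,t) c m r) w \<longleftrightarrow> gmove E step tau (SConf (s,t) c m r') w"
  by (auto elim!: gmove.cases intro: gmove.intros)

lemma moves_D: "gmove E step tau (DConf (s,t) c m r) w \<longleftrightarrow> gmove E step tau (DConf (s,t) c m r') w"
  by (auto elim!: gmove.cases intro: gmove.intros)

definition sw :: "('s,'a) conf \<Rightarrow> ('s,'a) conf \<Rightarrow> ('s,'a) conf list \<Rightarrow> ('s,'a) conf list" where
  "sw v1 v2 h = (case h of [] \<Rightarrow> [] | x#xs \<Rightarrow> (if x = v2 then v1 else x)#xs)"

lemma transfer:
  assumes own: "owner v1 = owner v2"
    and mv: "\<And>w. gmove E step tau v1 w \<longleftrightarrow> gmove E step tau v2 w"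
    and W: "wins E step tau p v1"
  shows "wins E step tau p v2"
proof -
  obtain \<sigma> where leg: "legal_strategy E step tau p \<sigma>"
    and fw: "\<And>xs. fin_play E step tau v1 xs \<Longrightarrow> fin_consistent p \<sigma> xs \<Longrightarrow> fin_winner xs = p"
    and iw: "\<And>\<rho>. inf_play E step tau v1 \<rho> \<Longrightarrow> inf_consistent p \<sigma> \<rho> \<Longrightarrow> inf_winner \<rho> = p"
    using W unfolding wins_def by blast
  define \<sigma>' where "\<sigma>' = (\<lambda>h. \<sigma> (sw v1 v2 h))"
  have lastsw: "h \<noteq> [] \<Longrightarrow> last (sw v1 v2 h) = last h \<or> (h = [v2] \<and> last (sw v1 v2 h) = v1)" for h
    by (cases h) (auto simp: sw_def)
  have swne: "h \<noteq> [] \<Longrightarrow> sw v1 v2 h \<noteq> []" for h by (cases h) (auto simp: sw_def)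
  have leg': "legal_strategy E step tau p \<sigma>'"
    unfolding legal_strategy_def
  proof (intro allI impI)
    fix h assume h: "h \<noteq> [] \<and> owner (last h) = p \<and> (\<exists>w. gmove E step tau (last h) w)"
    from lastsw[of h] h consider "last (sw v1 v2 h) = last h" | "h = [v2]" "last (sw v1 v2 h) = v1" by blast
    then show "gmove E step tau (last h) (\<sigma>' h)"
    proof cases
      case 1 then show ?thesis using leg h swne[of h] unfolding legal_strategy_def \<sigma>'_def by metis
    next
      case 2
      have "gmove E step tau v1 (\<sigma> (sw v1 v2 h))"
        using leg h swne[of h] 2 own mv unfolding legal_strategy_def by (metis last_ConsL)
      then show ?thesis using 2 mv unfolding \<sigma>'_def by simp
    qed
  qed
  have F: "fin_winner xs = p" if fp: "fin_play E step tau v2 xs" and fc: "fin_consistent p \<sigma>' xs" for xs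
  proof -
    from fp obtain ys where xs: "xs = v2 # ys" unfolding fin_play_def by (cases xs) auto
    let ?xs' = "v1 # ys"
    have nth: "?xs' ! Suc i = xs ! Suc i" for i using xs by simp
    have own': "owner (?xs' ! i) = owner (xs ! i)" for i using xs own by (cases i) auto
    have tk: "take (Suc i) ?xs' = sw v1 v2 (take (Suc i) xs)" for i using xs by (simp add: sw_def)
    have fp': "fin_play E step tau v1 ?xs'"
      unfolding fin_play_def
    proof (intro conjI)
      show "\<forall>i. Suc i < length ?xs' \<longrightarrow> gmove E step tau (?xs' ! i) (?xs' ! Suc i)"
      proof (intro allI impI)
        fix i assume "Suc i < length ?xs'"
        then have "gmove E step tau (xs ! i) (xs ! Suc i)" using fp xs unfolding fin_play_def by simp
        then show "gmove E step tau (?xs' ! i) (?xs' ! Suc i)" using xs mv by (cases i) auto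
      qed
      show "\<nexists>w. gmove E step tau (last ?xs') w"
        using fp xs mv unfolding fin_play_def by (cases ys) auto
    qed auto
    have fc': "fin_consistent p \<sigma> ?xs'"
      unfolding fin_consistent_def
    proof (intro allI impI)
      fix i assume "Suc i < length ?xs'" "owner (?xs' ! i) = p"
      then have "xs ! Suc i = \<sigma>' (take (Suc i) xs)" using fc xs own' unfolding fin_consistent_def by simp
      then show "?xs' ! Suc i = \<sigma> (take (Suc i) ?xs')" using nth tk unfolding \<sigma>'_def by simp
    qed
    have "fin_winner ?xs' = p" using fw fp' fc' .
    moreover have "owner (last ?xs') = owner (last xs)" using xs own by (cases ys) auto
    ultimately show ?thesis unfolding fin_winner_def by simp
  qed
  have I: "inf_winner \<rho> = p" if ip: "inf_play E step tau v2 \<rho>" and ic: "inf_consistent p \<sigma>' \<rho>" for \<rho>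
  proof -
    let ?r = "\<rho>(0 := v1)"
    have r0: "\<rho> 0 = v2" using ip unfolding inf_play_def by simp
    have ip': "inf_play E step tau v1 ?r"
      unfolding inf_play_def
    proof (intro conjI allI)
      fix i
      have "gmove E step tau (\<rho> i) (\<rho> (Suc i))" using ip unfolding inf_play_def by simp
      then show "gmove E step tau (?r i) (?r (Suc i))" using r0 mv by (cases i) auto
    qed simp
    have mp: "map ?r [0..<Suc i] = sw v1 v2 (map \<rho> [0..<Suc i])" for i
    proof -
      have "[0..<Suc i] = 0 # [Suc 0..<Suc i]" by (simp add: upt_rec)
      moreover have "map ?r [Suc 0..<Suc i] = map \<rho> [Suc 0..<Suc i]" by (rule map_cong) auto
      ultimately show ?thesis using r0 by (simp add: sw_def)
    qed
    have ownr: "owner (?r i) = owner (\<rho> i)" for i using r0 own by (cases i) auto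
    have ic': "inf_consistent p \<sigma> ?r"
      unfolding inf_consistent_def
    proof (intro allI impI)
      fix i assume "owner (?r i) = p"
      then have "\<rho> (Suc i) = \<sigma>' (map \<rho> [0..<Suc i])" using ic ownr unfolding inf_consistent_def by simp
      then show "?r (Suc i) = \<sigma> (map ?r [0..<Suc i])" using mp unfolding \<sigma>'_def by simp
    qed
    have "inf_winner ?r = p" using iw ip' ic' .
    moreover have "(\<exists>\<^sub>\<infinity>i. reward (?r i) = Check) = (\<exists>\<^sub>\<infinity>i. reward (\<rho> i) = Check)"
      unfolding INFM_nat by (metis fun_upd_apply gr_implies_not0)
    ultimately show ?thesis unfolding inf_winner_def by simp
  qed
  show ?thesis unfolding wins_def using leg' F I by blast
qed

theorem proposition5p7:
  fixes E :: "tag set" and step :: "'s \<Rightarrow> 'a \<Rightarrow> 's \<Rightarrow> bool" and tau :: 'a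
    and p :: player and s t :: 's
    and c :: "('a \<times> 's) option" and m :: "('s \<times> tag) option"
  shows "(wins E step tau p (SConf (s,t) c m Star) \<longleftrightarrow> wins E step tau p (SConf (s,t) c m Check))
       \<and> (wins E step tau p (DConf (s,t) c m Star) \<longleftrightarrow> wins E step tau p (DConf (s,t) c m Check))"
proof -
  have S: "wins E step tau p (SConf (s,t) c m r) \<Longrightarrow> wins E step tau p (SConf (s,t) c m r')" for r r'
    by (rule transfer[OF _ moves_S]) simp
  have D: "wins E step tau p (DConf (s,t) c m r) \<Longrightarrow> wins E step tau p (DConf (s,t) c m r')" for r r'
    by (rule transfer[OF _ moves_D]) simp
  show ?thesis using S D by blast
qed

end
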